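(* Suppose that \[ \mathcal M = \left\{ M \geq 0 : \begin{pmatrix} A - M & B^* \\ B & M \end{pmatrix} \geq 0\right\} \] is non-empty with maximal element $M_+$, minimal element $M_-$, and $M_* = \tfrac{1}{2}(M_+ + M_-)$. Let $A-M_\pm = E_\pm^*E_\pm$ and $A-M_* = E_*^*E_*$, $M_\pm = F_\pm^*F_\pm$ and $M_* = F_*^*F_*$, and $B = F_\pm^*G_\pm E_\pm = F_*^*G_* E_*$, where $G_\pm : \overline{\mathrm{ran}}\, E_\pm \to \overline{\mathrm{ran}}\, F_\pm$ and $G_*: \overline{\mathrm{ran}}\, E_* \to \overline{\mathrm{ran}}\, F_*$ are contractions. The set $\mathcal M$ is a singleton if and only if the operators $G_+$, $G_-$ and $G_*$ are unitary.
   Context: $A$ and $B$ are bounded linear operators on a Hilbert space, with $A$ selfadjoint; $\begin{pmatrix} A - M & B^* \\ B & M \end{pmatrix}$ is viewed as an operator on the direct sum of two copies of that space, and $\mathcal M$ is the set of positive operators $M$ making it positive. When non-empty, $\mathcal M$ is norm closed and convex and has a maximal element $M_+$ and a minimal element $M_-$. Here $\overline{\mathrm{ran}}\, X$ denotes the closure of the range of the operator $X$. *)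

theory Defs
  imports "HOL-Analysis.Analysis" "HOL-Library.Complex_Order"
begin

class cvec = real_vector +
  fixes scaleC :: "complex \<Rightarrow> 'a \<Rightarrow> 'a"
  assumes scaleC_add_right: "scaleC a (x + y) = scaleC a x + scaleC a y"
    and scaleC_add_left: "scaleC (a + b) x = scaleC a x + scaleC b x"
    and scaleC_scaleC: "scaleC a (scaleC b x) = scaleC (a * b) x"
    and scaleC_one: "scaleC 1 x = x"
    and scaleR_scaleC: "scaleR r x = scaleC (complex_of_real r) x"

class cinner_space = cvec + real_normed_vector +
  fixes cinner :: "'a \<Rightarrow> 'a \<Rightarrow> complex"
  assumes cinner_commute: "cinner x y = cnj (cinner y x)"
    and cinner_add_left: "cinner (x + y) z = cinner x z + cinner y z"
    and cinner_scaleC_left: "cinner (scaleC r x) y = cnj r * cinner x y"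
    and cinner_ge_zero: "0 \<le> cinner x x"
    and cinner_eq_zero_iff: "cinner x x = 0 \<longleftrightarrow> x = 0"
    and norm_eq_sqrt_cinner: "norm x = sqrt (cmod (cinner x x))"

class chilbert_space = cinner_space + complete_space

definition bounded_clinear :: "('a::cinner_space \<Rightarrow> 'b::cinner_space) \<Rightarrow> bool" where
  "bounded_clinear T \<longleftrightarrow>
     (\<forall>x y. T (x + y) = T x + T y) \<and> (\<forall>c x. T (scaleC c x) = scaleC c (T x)) \<and>
     (\<exists>K. \<forall>x. norm (T x) \<le> norm x * K)"

definition adj :: "('a::chilbert_space \<Rightarrow> 'b::chilbert_space) \<Rightarrow> ('b \<Rightarrow> 'a)" where
  "adj T = (SOME S. bounded_clinear S \<and> (\<forall>x y. cinner (T x) y = cinner x (S y)))"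

definition selfadjoint :: "('a::chilbert_space \<Rightarrow> 'a) \<Rightarrow> bool" where
  "selfadjoint T \<longleftrightarrow> (\<forall>x y. cinner (T x) y = cinner x (T y))"

text \<open>Positive operator: \<open>\<langle>Tx,x\<rangle> \<ge> 0\<close> (in the complex order, i.e. real and nonnegative).\<close>
definition op_pos :: "('a::chilbert_space \<Rightarrow> 'a) \<Rightarrow> bool" where
  "op_pos T \<longleftrightarrow> (\<forall>x. 0 \<le> cinner (T x) x)"

definition op_le :: "('a::chilbert_space \<Rightarrow> 'a) \<Rightarrow> ('a \<Rightarrow> 'a) \<Rightarrow> bool" where
  "op_le S T \<longleftrightarrow> op_pos (T - S)"

text \<open>Positivity of the block operator \<open>[[P, Q], [R, S]]\<close> on \<open>H \<oplus> H\<close>: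
  \<open>\<langle>(Px + Qy, Rx + Sy), (x, y)\<rangle> \<ge> 0\<close> for all \<open>x, y\<close>.\<close>
definition block_pos ::
  "('a::chilbert_space \<Rightarrow> 'a) \<Rightarrow> ('a \<Rightarrow> 'a) \<Rightarrow> ('a \<Rightarrow> 'a) \<Rightarrow> ('a \<Rightarrow> 'a) \<Rightarrow> bool" where
  "block_pos P Q R S \<longleftrightarrow> (\<forall>x y. 0 \<le> cinner (P x + Q y) x + cinner (R x + S y) y)"

definition Mset :: "('a::chilbert_space \<Rightarrow> 'a) \<Rightarrow> ('a \<Rightarrow> 'a) \<Rightarrow> ('a \<Rightarrow> 'a) set" where
  "Mset A B = {M. bounded_clinear M \<and> op_pos M \<and> block_pos (A - M) (adj B) B M}"

definition contraction_between :: "('a::chilbert_space \<Rightarrow> 'b::chilbert_space) \<Rightarrow> 'a set \<Rightarrow> 'b set \<Rightarrow> bool" where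
  "contraction_between G U V \<longleftrightarrow>
     (\<forall>u\<in>U. \<forall>v\<in>U. G (u + v) = G u + G v) \<and>
     (\<forall>c. \<forall>u\<in>U. G (scaleC c u) = scaleC c (G u)) \<and>
     G ` U \<subseteq> V \<and> (\<forall>u\<in>U. norm (G u) \<le> norm u)"

definition unitary_between :: "('a::chilbert_space \<Rightarrow> 'b::chilbert_space) \<Rightarrow> 'a set \<Rightarrow> 'b set \<Rightarrow> bool" where
  "unitary_between G U V \<longleftrightarrow>
     (\<forall>u\<in>U. \<forall>v\<in>U. G (u + v) = G u + G v) \<and>
     (\<forall>c. \<forall>u\<in>U. G (scaleC c u) = scaleC c (G u)) \<and>
     G ` U = V \<and> (\<forall>u\<in>U. \<forall>v\<in>U. cinner (G u) (G v) = cinner u v)"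

end

theory Submission
  imports Defs
begin

lemma cinner_add_right: "cinner x (y + z) = cinner x y + cinner x z"
  by (metis cinner_commute cinner_add_left complex_cnj_add)
lemma cinner_scaleC_right: "cinner x (scaleC r y) = r * cinner x y"
  by (metis cinner_commute cinner_scaleC_left complex_cnj_cnj complex_cnj_mult)
lemma cinner_zero_left[simp]: "cinner 0 y = 0"
  using cinner_add_left[of 0 0 y] by simp
lemma cinner_zero_right[simp]: "cinner x 0 = 0"
  using cinner_add_right[of x 0 0] by simp
lemma scaleC_minus1: "scaleC (-1) (x::'a::cinner_space) = - x"
proof -
  have "scaleC (-1) x = scaleC (complex_of_real (-1)) x" by simp
  also have "\<dots> = scaleR (-1) x" by (rule scaleR_scaleC[symmetric])
  also have "\<dots> = - x" by (rule scaleR_minus1_left)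
  finally show ?thesis .
qed

lemma cinner_minus_left: "cinner (- x) y = - cinner x y"
  using cinner_scaleC_left[of "-1" x y] by (simp add: scaleC_minus1)

lemma cinner_minus_right: "cinner x (- y) = - cinner x y"
  using cinner_scaleC_right[of x "-1" y] by (simp add: scaleC_minus1)
lemma cinner_diff_left: "cinner (x - y) z = cinner x z - cinner y z"
  by (simp only: cinner_add_left cinner_minus_left diff_conv_add_uminus)
lemma cinner_diff_right: "cinner x (y - z) = cinner x y - cinner x z"
  by (simp only: cinner_add_right cinner_minus_right diff_conv_add_uminus)
lemma cinner_scaleR_left: "cinner (scaleR r x) y = complex_of_real r * cinner x y"
  by (simp add: scaleR_scaleC cinner_scaleC_left)
lemma cinner_scaleR_right: "cinner x (scaleR r y) = complex_of_real r * cinner x y"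
  by (simp add: scaleR_scaleC cinner_scaleC_right)
lemma cinner_self: "cinner x x = complex_of_real ((norm x)^2)"
proof -
  have "0 \<le> cinner x x" by (rule cinner_ge_zero)
  then have "cinner x x = complex_of_real (cmod (cinner x x))"
    by (simp add: less_eq_complex_def complex_eq_iff cmod_eq_Re)
  then show ?thesis by (simp add: norm_eq_sqrt_cinner)
qed
lemma cinner_self_Re: "Re (cinner x x) = (norm x)^2"
  by (simp add: cinner_self del: of_real_power)
lemma norm_scaleC: "norm (scaleC c (x::'a::cinner_space)) = cmod c * norm x"
proof -
  have "complex_of_real ((norm (scaleC c x))^2) = cinner (scaleC c x) (scaleC c x)"
    by (simp only: cinner_self)
  also have "\<dots> = (cnj c * c) * cinner x x"
    by (simp add: cinner_scaleC_left cinner_scaleC_right)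
  also have "\<dots> = complex_of_real ((cmod c * norm x)^2)"
    by (simp only: cinner_self mult.commute[of "cnj c"] complex_norm_square[symmetric] of_real_mult[symmetric] power_mult_distrib)
  finally have "(norm (scaleC c x))^2 = (cmod c * norm x)^2" using of_real_eq_iff by blast
  then show ?thesis by (simp add: power2_eq_iff_nonneg)
qed
lemma cinner_cnj_add: "cinner x y + cinner y x = complex_of_real (2 * Re (cinner x y))"
  by (subst cinner_commute[of y x]) (simp add: complex_add_cnj)
lemma norm_add_sq: "(norm (x + y))^2 = (norm x)^2 + (norm y)^2 + 2 * Re (cinner x y)"
proof -
  have "complex_of_real ((norm (x+y))^2) = cinner (x+y) (x+y)" by (simp only: cinner_self)
  also have "\<dots> = cinner x x + cinner y y + (cinner x y + cinner y x)"
    by (simp add: cinner_add_left cinner_add_right algebra_simps)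
  also have "\<dots> = complex_of_real ((norm x)^2 + (norm y)^2 + 2 * Re (cinner x y))"
    by (simp only: cinner_self cinner_cnj_add of_real_add)
  finally show ?thesis using of_real_eq_iff by blast
qed
lemma cnj_mult_self: "cnj c * c = complex_of_real ((cmod c)^2)"
  by (simp only: complex_norm_square mult.commute)
lemma cauchy_schwarz: "cmod (cinner x y) \<le> norm x * norm y"
proof (cases "y = 0")
  case True then show ?thesis by simp
next
  case False
  then have ny: "norm y > 0" by simp
  define c where "c = cinner x y"
  define n where "n = (norm y)^2"
  have n0: "n > 0" using ny unfolding n_def by simp
  define t where "t = cnj c / complex_of_real n"
  have yx: "cinner y x = cnj c" unfolding c_def by (rule cinner_commute)
  have e1: "t * c = complex_of_real ((cmod c)^2 / n)"
    unfolding t_def using cnj_mult_self[of c] by (simp add: field_simps)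
  have e2: "cnj t * cnj c = complex_of_real ((cmod c)^2 / n)"
    unfolding t_def using cnj_mult_self[of c] by (simp add: field_simps mult.commute)
  have e3: "cnj t * t * complex_of_real n = complex_of_real ((cmod c)^2 / n)"
    unfolding t_def using cnj_mult_self[of c] n0 by (simp add: field_simps power2_eq_square)
  have "complex_of_real ((norm (x - scaleC t y))^2) = cinner (x - scaleC t y) (x - scaleC t y)"
    by (simp only: cinner_self)
  also have "\<dots> = cinner x x - t * cinner x y - cnj t * cinner y x + cnj t * t * cinner y y"
    by (simp add: cinner_diff_left cinner_diff_right cinner_scaleC_left cinner_scaleC_right algebra_simps)
  also have "\<dots> = complex_of_real ((norm x)^2) - complex_of_real ((cmod c)^2 / n)"
    unfolding yx c_def[symmetric] cinner_self[of y] n_def[symmetric] e1 e2 e3 cinner_self[of x]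
    by simp
  finally have "(norm (x - scaleC t y))^2 = (norm x)^2 - (cmod c)^2 / n"
    by (metis of_real_diff of_real_eq_iff)
  then have "0 \<le> (norm x)^2 - (cmod c)^2 / n" by (metis zero_le_power2)
  then have "(cmod c)^2 \<le> (norm x)^2 * n" using n0
    by (simp add: field_simps)
  then have "(cmod c)^2 \<le> (norm x * norm y)^2" unfolding n_def by (simp add: power_mult_distrib)
  then show ?thesis unfolding c_def by (simp add: power2_le_iff_abs_le)  
qed

definition csubspace :: "'a::cinner_space set \<Rightarrow> bool" where
  "csubspace K \<longleftrightarrow> 0 \<in> K \<and> (\<forall>x\<in>K. \<forall>y\<in>K. x + y \<in> K) \<and> (\<forall>c. \<forall>x\<in>K. scaleC c x \<in> K)"

lemma csubspace_scaleR: "csubspace K \<Longrightarrow> x \<in> K \<Longrightarrow> scaleR r x \<in> K"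
  unfolding csubspace_def by (simp add: scaleR_scaleC)
lemma csubspace_minus: "csubspace K \<Longrightarrow> x \<in> K \<Longrightarrow> - x \<in> K"
  unfolding csubspace_def by (metis scaleC_minus1)
lemma csubspace_diff: "csubspace K \<Longrightarrow> x \<in> K \<Longrightarrow> y \<in> K \<Longrightarrow> x - y \<in> K"
  using csubspace_minus[of K y] unfolding csubspace_def by (metis diff_conv_add_uminus)

lemma parallelogram: "(norm ((a::'a::cinner_space) + b))^2 + (norm (a - b))^2 = 2 * (norm a)^2 + 2 * (norm b)^2"
  using norm_add_sq[of a b] norm_add_sq[of a "-b"] by (simp add: cinner_minus_right)

lemma proj_exists:
  fixes K :: "'a::chilbert_space set"
  assumes K: "csubspace K" "closed K"
  shows "\<exists>p\<in>K. \<forall>k\<in>K. cinner k (z - p) = 0"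
proof -
  define D where "D = (\<lambda>k. norm (z - k)) ` K"
  define d where "d = Inf D"
  have D0: "D \<noteq> {}" using K unfolding D_def csubspace_def by auto
  have Dbdd: "bdd_below D" unfolding D_def by (rule bdd_belowI[of _ 0]) auto
  have dle: "d \<le> norm (z - k)" if "k \<in> K" for k
    unfolding d_def D_def by (rule cInf_lower) (use that Dbdd D_def in auto)
  have d0: "0 \<le> d" unfolding d_def using D0 by (intro cInf_greatest) (auto simp: D_def)
  have "\<exists>k\<in>K. (norm (z - k))^2 < d^2 + inverse (real (Suc n))" for n
  proof -
    have "d < sqrt (d^2 + inverse (real (Suc n)))"
      using d0 by (simp add: real_less_rsqrt)
    then obtain v where "v \<in> D" "v < sqrt (d^2 + inverse (real (Suc n)))"
      using cInf_lessD[OF D0] unfolding d_def by blast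
    then obtain k where k: "k \<in> K" "norm (z - k) < sqrt (d^2 + inverse (real (Suc n)))"
      unfolding D_def by auto
    then have "(norm (z - k))^2 < d^2 + inverse (real (Suc n))"
      by (metis norm_ge_zero real_sqrt_less_iff real_sqrt_pow2_iff power2_less_eq_zero_iff
          not_less real_less_rsqrt abs_of_nonneg real_sqrt_abs real_sqrt_less_mono sqrt_le_D)
    with k show ?thesis by blast
  qed
  then obtain p where pK: "\<And>n. p n \<in> K" and pn: "\<And>n. (norm (z - p n))^2 < d^2 + inverse (real (Suc n))"
    by metis
  have bound: "(norm (p m - p n))^2 \<le> 2 * inverse (real (Suc m)) + 2 * inverse (real (Suc n))" for m n
  proof -
    have mid: "scaleR (1/2) (p m + p n) \<in> K"
      using K(1) pK by (simp add: csubspace_scaleR csubspace_def)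
    have "(z - p m) + (z - p n) = scaleR 2 (z - scaleR (1/2) (p m + p n))"
      by (simp add: algebra_simps scaleR_2)
    then have "norm ((z - p m) + (z - p n)) = 2 * norm (z - scaleR (1/2) (p m + p n))"
      by simp
    moreover have "d \<le> norm (z - scaleR (1/2) (p m + p n))" using dle mid by blast
    ultimately have "2 * d \<le> norm ((z - p m) + (z - p n))" by simp
    then have "(2 * d)^2 \<le> (norm ((z - p m) + (z - p n)))^2"
      using d0 by (intro power_mono) auto
    moreover have "(z - p m) - (z - p n) = - (p m - p n)" by simp
    then have "norm ((z - p m) - (z - p n)) = norm (p m - p n)" by (metis norm_minus_cancel)
    moreover note parallelogram[of "z - p m" "z - p n"] pn[of m] pn[of n]
    ultimately show ?thesis by (simp add: power_mult_distrib)
  qed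
  have "Cauchy p"
  proof (rule CauchyI)
    fix e :: real assume e: "0 < e"
    obtain N where N: "inverse (real (Suc N)) < e^2 / 4"
      using e reals_Archimedean[of "e^2/4"] by auto
    show "\<exists>M. \<forall>m\<ge>M. \<forall>n\<ge>M. norm (p m - p n) < e"
    proof (intro exI allI impI)
      fix m n assume mn: "N \<le> m" "N \<le> n"
      have "inverse (real (Suc m)) \<le> inverse (real (Suc N))"
        using mn by (simp add: le_imp_inverse_le)
      moreover have "inverse (real (Suc n)) \<le> inverse (real (Suc N))"
        using mn by (simp add: le_imp_inverse_le)
      ultimately have "(norm (p m - p n))^2 < e^2" using bound[of m n] N by linarith
      then show "norm (p m - p n) < e" using e by (simp add: power_less_imp_less_base)
    qed
  qed
  then obtain q where q: "p \<longlonglongrightarrow> q" using Cauchy_convergent convergent_def by blast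
  have qK: "q \<in> K" using closed_sequentially[OF K(2) pK q] .
  have lim1: "(\<lambda>n. (norm (z - p n))^2) \<longlonglongrightarrow> (norm (z - q))^2"
    by (intro tendsto_intros q)
  have lim2: "(\<lambda>n. d^2 + inverse (real (Suc n))) \<longlonglongrightarrow> d^2 + 0"
    by (intro tendsto_intros LIMSEQ_inverse_real_of_nat)
  have qd: "(norm (z - q))^2 \<le> d^2"
    using LIMSEQ_le[OF lim1 lim2] pn by (simp add: less_imp_le)
  have minq: "(norm (z - q))^2 \<le> (norm (z - k))^2" if "k \<in> K" for k
    using qd dle[OF that] d0 by (meson order_trans power_mono)
  show ?thesis
  proof (intro bexI[OF _ qK] ballI)
    fix k assume k: "k \<in> K"
    define e where "e = z - q"
    define c where "c = cinner k e"
    define s where "s = 1 / ((norm k)^2 + 1)"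
    have s0: "0 < s" unfolding s_def by (simp add: add_nonneg_pos)
    have sk: "s * (norm k)^2 < 1"
    proof -
      have "0 < 1 + (norm k)^2" by (simp add: add_pos_nonneg)
      then show ?thesis unfolding s_def by (simp add: divide_less_eq)
    qed
    define t where "t = complex_of_real s * c"
    have "q + scaleC t k \<in> K" using K(1) qK k unfolding csubspace_def by blast
    then have ineq: "(norm e)^2 \<le> (norm (e - scaleC t k))^2"
      using minq unfolding e_def by (simp add: algebra_simps)
    have "complex_of_real ((norm (e - scaleC t k))^2) = cinner e e - t * cinner e k - cnj t * cinner k e + cnj t * t * cinner k k"
      by (simp only: cinner_self[symmetric]) (simp add: cinner_diff_left cinner_diff_right cinner_scaleC_left cinner_scaleC_right algebra_simps)
    also have "\<dots> = complex_of_real ((norm e)^2 - 2 * s * (cmod c)^2 + s^2 * (cmod c)^2 * (norm k)^2)"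
    proof -
      have ek: "cinner e k = cnj c" unfolding c_def by (rule cinner_commute)
      have cc: "cnj c * c = complex_of_real ((cmod c)^2)" by (rule cnj_mult_self)
      have e1: "t * cnj c = complex_of_real (s * (cmod c)^2)"
        unfolding t_def using cc by (simp add: mult.commute mult.left_commute)
      have e2: "cnj t * c = complex_of_real (s * (cmod c)^2)"
        unfolding t_def using cc by (simp add: mult.commute mult.left_commute)
      have e3: "cnj t * t * complex_of_real ((norm k)^2) = complex_of_real (s^2 * (cmod c)^2 * (norm k)^2)"
        unfolding t_def using cc by (simp add: mult.commute mult.left_commute power2_eq_square)
      show ?thesis unfolding ek c_def[symmetric] cinner_self[of k] e1 e2 e3 cinner_self[of e]
        by simp

    qed
    finally have "(norm e)^2 \<le> (norm e)^2 - 2 * s * (cmod c)^2 + s^2 * (cmod c)^2 * (norm k)^2"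
      using ineq by (simp only: of_real_eq_iff)
    then have "2 * s * (cmod c)^2 \<le> s * (s * (norm k)^2) * (cmod c)^2"
      by (simp add: power2_eq_square algebra_simps)
    also have "\<dots> \<le> s * (cmod c)^2" using sk s0
      by (intro mult_right_mono) (auto intro: mult_left_le)
    finally have "(cmod c)^2 \<le> 0" using s0 by (simp add: algebra_simps)
    then show "cinner k (z - q) = 0" unfolding c_def e_def by simp
  qed
qed

lemma bclin_add: "bounded_clinear T \<Longrightarrow> T (x + y) = T x + T y"
  unfolding bounded_clinear_def by blast
lemma bclin_scaleC: "bounded_clinear T \<Longrightarrow> T (scaleC c x) = scaleC c (T x)"
  unfolding bounded_clinear_def by blast
lemma bclin_bound: "bounded_clinear T \<Longrightarrow> \<exists>K. \<forall>x. norm (T x) \<le> norm x * K"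
  unfolding bounded_clinear_def by blast
lemma bclin_zero: "bounded_clinear T \<Longrightarrow> T 0 = 0"
  using bclin_add[of T 0 0] by simp
lemma bclin_minus: "bounded_clinear T \<Longrightarrow> T (- x) = - T x"
  using bclin_scaleC[of T "-1" x] by (simp add: scaleC_minus1)
lemma bclin_diff: "bounded_clinear T \<Longrightarrow> T (x - y) = T x - T y"
  by (simp add: diff_conv_add_uminus bclin_add bclin_minus del: add_uminus_conv_diff)
lemma bclin_scaleR: "bounded_clinear T \<Longrightarrow> T (scaleR r x) = scaleR r (T x)"
  by (simp add: scaleR_scaleC bclin_scaleC)
lemma bclin_bounded_linear: "bounded_clinear T \<Longrightarrow> bounded_linear T"
proof -
  assume T: "bounded_clinear T"
  obtain K where K: "\<And>x. norm (T x) \<le> norm x * K" using bclin_bound[OF T] by blast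
  show ?thesis by (rule bounded_linear_intro[where K=K]) (simp_all add: bclin_add[OF T] bclin_scaleR[OF T] K)
qed
lemma bclin_intro:
  assumes "\<And>x y. T (x + y) = T x + T y" "\<And>c x. T (scaleC c x) = scaleC c (T x)"
    "\<And>x. norm (T x) \<le> norm x * K"
  shows "bounded_clinear T"
  unfolding bounded_clinear_def using assms by blast
lemma bclin_comp:
  assumes S: "bounded_clinear S" and T: "bounded_clinear T"
  shows "bounded_clinear (\<lambda>x. S (T x))"
proof -
  obtain K1 where K1: "\<And>x. norm (S x) \<le> norm x * K1" using bclin_bound[OF S] by blast
  obtain K2 where K2: "\<And>x. norm (T x) \<le> norm x * K2" using bclin_bound[OF T] by blast
  have "norm (S (T x)) \<le> norm x * (max K2 0 * max K1 0)" for x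
  proof -
    have "norm (S (T x)) \<le> norm (T x) * max K1 0"
      using K1[of "T x"] by (meson max.cobounded1 mult_left_mono norm_ge_zero order_trans)
    also have "\<dots> \<le> (norm x * max K2 0) * max K1 0"
      using K2[of x] mult_left_mono[OF max.cobounded1[of K2 0], of "norm x"]
      by (intro mult_right_mono) auto
    finally show ?thesis by (simp add: mult.assoc)
  qed
  then show ?thesis
    by (intro bclin_intro[where K="max K2 0 * max K1 0"]) (auto simp: bclin_add[OF S] bclin_add[OF T] bclin_scaleC[OF S] bclin_scaleC[OF T])
qed
lemma bclin_comp': "bounded_clinear S \<Longrightarrow> bounded_clinear T \<Longrightarrow> bounded_clinear (S \<circ> T)"
  using bclin_comp[of S T] by (simp add: comp_def)
lemma scaleC_minus_right: "scaleC c (- (b::'a::cinner_space)) = - scaleC c b"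
proof -
  have "scaleC c (- b) = scaleC c (scaleC (-1) b)" by (simp add: scaleC_minus1)
  also have "\<dots> = scaleC (-1) (scaleC c b)" by (simp add: scaleC_scaleC)
  finally show ?thesis by (simp add: scaleC_minus1)
qed
lemma scaleC_diff_right: "scaleC c ((a::'a::cinner_space) - b) = scaleC c a - scaleC c b"
  by (simp only: diff_conv_add_uminus scaleC_add_right scaleC_minus_right)
lemma bclin_diff_fun:
  assumes S: "bounded_clinear S" and T: "bounded_clinear T"
  shows "bounded_clinear (\<lambda>x. S x - T x)"
proof -
  obtain K1 where K1: "\<And>x. norm (S x) \<le> norm x * K1" using bclin_bound[OF S] by blast
  obtain K2 where K2: "\<And>x. norm (T x) \<le> norm x * K2" using bclin_bound[OF T] by blast
  have "norm (S x - T x) \<le> norm x * (K1 + K2)" for x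
    using norm_triangle_ineq4[of "S x" "T x"] K1[of x] K2[of x] by (simp add: algebra_simps)
  then show ?thesis
    by (intro bclin_intro[where K="K1 + K2"])
      (simp_all add: bclin_add[OF S] bclin_add[OF T] bclin_scaleC[OF S] bclin_scaleC[OF T] scaleC_diff_right)
qed
lemma bclin_continuous: "bounded_clinear T \<Longrightarrow> continuous_on UNIV T"
  by (intro linear_continuous_on bclin_bounded_linear)
lemma bclin_tendsto: "bounded_clinear T \<Longrightarrow> (f \<longlongrightarrow> l) F \<Longrightarrow> ((\<lambda>n. T (f n)) \<longlongrightarrow> T l) F"
  using bounded_linear.tendsto[OF bclin_bounded_linear] by blast

lemma cinner_ext: "(\<And>x. cinner x a = cinner x b) \<Longrightarrow> a = b"
  using cinner_eq_zero_iff[of "a - b"] by (metis cinner_diff_right eq_iff_diff_eq_0)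

lemma riesz:
  fixes \<phi> :: "'a::chilbert_space \<Rightarrow> complex"
  assumes add: "\<And>x y. \<phi> (x + y) = \<phi> x + \<phi> y" and sc: "\<And>c x. \<phi> (scaleC c x) = c * \<phi> x"
    and bnd: "\<And>x. cmod (\<phi> x) \<le> norm x * K"
  shows "\<exists>w. \<forall>x. \<phi> x = cinner w x"
proof (cases "\<forall>x. \<phi> x = 0")
  case True then show ?thesis by (intro exI[of _ 0]) simp
next
  case False
  then obtain z where z: "\<phi> z \<noteq> 0" by blast
  have bl: "bounded_linear \<phi>"
    by (rule bounded_linear_intro[where K=K]) (auto simp: add bnd scaleR_scaleC sc scaleR_conv_of_real)
  define K0 where "K0 = {x. \<phi> x = 0}"
  have phi0: "\<phi> 0 = 0" using add[of 0 0] by simp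
  have csK: "csubspace K0" unfolding csubspace_def K0_def by (auto simp: add sc phi0)
  have clK: "closed K0" unfolding K0_def
    by (intro closed_Collect_eq linear_continuous_on bl continuous_on_const)
  obtain p where pK: "p \<in> K0" and orth: "\<And>k. k \<in> K0 \<Longrightarrow> cinner k (z - p) = 0"
    using proj_exists[OF csK clK] by blast
  define e where "e = z - p"
  have phim: "\<phi> (- x) = - \<phi> x" for x using sc[of "-1" x] by (simp add: scaleC_minus1)
  have "\<phi> e = \<phi> z" unfolding e_def using pK add[of z "-p"] phim[of p] by (simp add: K0_def)
  then have pe: "\<phi> e \<noteq> 0" using z by simp
  then have e0: "e \<noteq> 0" using phi0 by auto
  then have ne: "(norm e)^2 > 0" by simp
  define w where "w = scaleC (cnj (\<phi> e) / complex_of_real ((norm e)^2)) e"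
  show ?thesis
  proof (intro exI allI)
    fix x
    define v where "v = scaleC (\<phi> x) e - scaleC (\<phi> e) x"
    have "\<phi> v = 0" unfolding v_def using add phim sc
      by (simp add: diff_conv_add_uminus del: add_uminus_conv_diff)
    then have "cinner v e = 0" using orth[of v] unfolding K0_def e_def by simp
    then have "cinner e v = 0" by (metis cinner_commute complex_cnj_zero)
    then have "\<phi> x * complex_of_real ((norm e)^2) = \<phi> e * cinner e x"
      unfolding v_def by (simp add: cinner_diff_right cinner_scaleC_right cinner_self)
    then have "\<phi> x = \<phi> e * cinner e x / complex_of_real ((norm e)^2)"
      using ne by (simp add: field_simps)
    also have "\<dots> = cinner w x" unfolding w_def by (simp add: cinner_scaleC_left)
    finally show "\<phi> x = cinner w x" .
  qed
qed

lemma adj_exists: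
  fixes T :: "'a::chilbert_space \<Rightarrow> 'b::chilbert_space"
  assumes T: "bounded_clinear T"
  shows "\<exists>S. bounded_clinear S \<and> (\<forall>x y. cinner (T x) y = cinner x (S y))"
proof -
  obtain K0 where K0: "\<And>x. norm (T x) \<le> norm x * K0" using bclin_bound[OF T] by blast
  define K where "K = max K0 0"
  have Kp: "0 \<le> K" unfolding K_def by simp
  have K: "norm (T x) \<le> norm x * K" for x
    using K0[of x] mult_left_mono[OF max.cobounded1[of K0 0], of "norm x"] unfolding K_def by auto
  have "\<exists>w. \<forall>x. cinner (T x) y = cinner x w" for y
  proof -
    have "\<exists>w. \<forall>x. cinner y (T x) = cinner w x"
    proof (rule riesz[where K="norm y * K"])
      fix x
      have "cmod (cinner y (T x)) \<le> norm y * norm (T x)" by (rule cauchy_schwarz)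
      also have "\<dots> \<le> norm y * (norm x * K)" by (intro mult_left_mono K) simp
      finally show "cmod (cinner y (T x)) \<le> norm x * (norm y * K)" by (simp add: algebra_simps)
    qed (simp_all add: bclin_add[OF T] bclin_scaleC[OF T] cinner_add_right cinner_scaleC_right)
    then show ?thesis by (metis cinner_commute)
  qed
  then obtain S where S: "\<And>x y. cinner (T x) y = cinner x (S y)" by metis
  have Sadd: "S (y + y') = S y + S y'" for y y'
    by (rule cinner_ext) (simp add: S[symmetric] cinner_add_right)
  have Ssc: "S (scaleC c y) = scaleC c (S y)" for c y
    by (rule cinner_ext) (simp add: S[symmetric] cinner_scaleC_right)
  have Sb: "norm (S y) \<le> norm y * K" for y
  proof (cases "S y = 0")
    case True
    with Kp show ?thesis by simp
  next
    case False
    have "complex_of_real ((norm (S y))^2) = cinner (T (S y)) y" by (simp only: S cinner_self)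
    then have "(norm (S y))^2 \<le> cmod (cinner (T (S y)) y)" by (metis norm_of_real abs_power2 order_refl real_norm_def)
    also have "\<dots> \<le> norm (T (S y)) * norm y" by (rule cauchy_schwarz)
    also have "\<dots> \<le> norm (S y) * K * norm y" by (intro mult_right_mono K) simp
    finally have "norm (S y) * norm (S y) \<le> norm (S y) * (norm y * K)"
      by (simp add: power2_eq_square algebra_simps)
    then show ?thesis using False by simp
  qed
  have "bounded_clinear S" by (rule bclin_intro[OF Sadd Ssc Sb])
  with S show ?thesis by blast
qed

lemma adj:
  assumes "bounded_clinear (T :: 'a::chilbert_space \<Rightarrow> 'b::chilbert_space)"
  shows "bounded_clinear (adj T)" "cinner (T x) y = cinner x (adj T y)"
proof -
  have "bounded_clinear (adj T) \<and> (\<forall>x y. cinner (T x) y = cinner x (adj T y))"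
    unfolding adj_def
    by (rule someI_ex[where P="\<lambda>S. bounded_clinear S \<and> (\<forall>x y. cinner (T x) y = cinner x (S y))"])
       (rule adj_exists[OF assms])
  then show "bounded_clinear (adj T)" "cinner (T x) y = cinner x (adj T y)" by auto
qed

lemma adj_left: "bounded_clinear T \<Longrightarrow> cinner (adj T y) x = cinner y (T x)"
  by (metis adj(2) cinner_commute)

lemma bounded_linear_scaleC: "bounded_linear (scaleC c :: 'a::cinner_space \<Rightarrow> 'a)"
proof (rule bounded_linear_intro[where K="cmod c"])
  show "scaleC c (x + y) = scaleC c x + scaleC c y" for x y :: 'a by (rule scaleC_add_right)
  show "scaleC c (scaleR r x) = scaleR r (scaleC c x)" for r and x :: 'a
    by (simp add: scaleR_scaleC scaleC_scaleC mult.commute)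
  show "norm (scaleC c x) \<le> norm x * cmod c" for x :: 'a by (simp add: norm_scaleC mult.commute)
qed

lemma csubspace_closure:
  fixes S :: "'a::cinner_space set"
  assumes S: "csubspace S"
  shows "csubspace (closure S)"
  unfolding csubspace_def
proof (intro conjI ballI allI)
  show "0 \<in> closure S" using S closure_subset unfolding csubspace_def by blast
next
  fix x y assume "x \<in> closure S" "y \<in> closure S"
  then obtain a b where a: "\<And>n. a n \<in> S" "a \<longlonglongrightarrow> x" and b: "\<And>n. b n \<in> S" "b \<longlonglongrightarrow> y"
    unfolding closure_sequential by metis
  have "\<forall>n. a n + b n \<in> S" using a b S unfolding csubspace_def by blast
  moreover have "(\<lambda>n. a n + b n) \<longlonglongrightarrow> x + y" using a b by (intro tendsto_add) auto
  ultimately show "x + y \<in> closure S" unfolding closure_sequential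
    by (intro exI[where x="\<lambda>n. a n + b n"]) simp
next
  fix c and x assume "x \<in> closure S"
  then obtain a where a: "\<And>n. a n \<in> S" "a \<longlonglongrightarrow> x"
    unfolding closure_sequential by metis
  have "\<forall>n. scaleC c (a n) \<in> S" using a S unfolding csubspace_def by blast
  moreover have "(\<lambda>n. scaleC c (a n)) \<longlonglongrightarrow> scaleC c x"
    using bounded_linear.tendsto[OF bounded_linear_scaleC a(2)] .
  ultimately show "scaleC c x \<in> closure S" unfolding closure_sequential
    by (intro exI[where x="\<lambda>n. scaleC c (a n)"]) simp
qed

lemma csubspace_range: "bounded_clinear E \<Longrightarrow> csubspace (range E)"
  unfolding csubspace_def
proof (intro conjI ballI allI)
  assume E: "bounded_clinear E"
  show "0 \<in> range E" by (metis bclin_zero[OF E] rangeI)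
  show "x + y \<in> range E" if "x \<in> range E" "y \<in> range E" for x y
    using that by (auto simp: bclin_add[OF E, symmetric])
  show "scaleC c x \<in> range E" if "x \<in> range E" for c x
    using that by (auto simp: bclin_scaleC[OF E, symmetric])
qed

lemma csubspace_closure_range: "bounded_clinear E \<Longrightarrow> csubspace (closure (range E))"
  by (intro csubspace_closure csubspace_range)

lemma polarization_zero:
  fixes T :: "'a::cinner_space \<Rightarrow> 'a"
  assumes add: "\<And>x y. T (x + y) = T x + T y" and sc: "\<And>c x. T (scaleC c x) = scaleC c (T x)"
    and z: "\<And>x. cinner (T x) x = 0"
  shows "T x = 0"
proof -
  have a: "cinner (T x) y + cinner (T y) x = 0" for y
    using z[of "x + y"] z[of x] z[of y] by (simp add: add cinner_add_left cinner_add_right) (simp add: add.commute)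
  have b: "cinner (T x) y = 0" for y
  proof -
    have "cinner (T x) (scaleC \<i> y) + cinner (T (scaleC \<i> y)) x = 0" by (rule a)
    then have "\<i> * cinner (T x) y - \<i> * cinner (T y) x = 0"
      by (simp add: sc cinner_scaleC_left cinner_scaleC_right)
    then have "cinner (T x) y - cinner (T y) x = 0"
      by (metis complex_i_not_zero diff_zero mult_eq_0_iff right_diff_distrib)
    with a[of y] show ?thesis by (simp add: algebra_simps)
  qed
  show ?thesis using b[of "T x"] cinner_eq_zero_iff by blast
qed

lemma cb_add: "contraction_between G U V \<Longrightarrow> u \<in> U \<Longrightarrow> v \<in> U \<Longrightarrow> G (u + v) = G u + G v"
  unfolding contraction_between_def by blast
lemma cb_scaleC: "contraction_between G U V \<Longrightarrow> u \<in> U \<Longrightarrow> G (scaleC c u) = scaleC c (G u)"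
  unfolding contraction_between_def by blast
lemma cb_norm: "contraction_between G U V \<Longrightarrow> u \<in> U \<Longrightarrow> norm (G u) \<le> norm u"
  unfolding contraction_between_def by blast
lemma cb_into: "contraction_between G U V \<Longrightarrow> u \<in> U \<Longrightarrow> G u \<in> V"
  unfolding contraction_between_def by blast
lemma cb_minus: "contraction_between G U V \<Longrightarrow> u \<in> U \<Longrightarrow> G (- u) = - G u"
  using cb_scaleC[of G U V u "-1"] by (simp add: scaleC_minus1)
lemma cb_diff: "contraction_between G U V \<Longrightarrow> csubspace U \<Longrightarrow> u \<in> U \<Longrightarrow> v \<in> U \<Longrightarrow> G (u - v) = G u - G v"
  using cb_add[of G U V u "- v"] cb_minus[of G U V v] csubspace_minus[of U v]
  by (simp add: diff_conv_add_uminus del: add_uminus_conv_diff)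
lemma ub_cb: "unitary_between G U V \<Longrightarrow> contraction_between G U V"
  unfolding unitary_between_def contraction_between_def
  by (auto simp: norm_eq_sqrt_cinner)

lemma block_pos_form:
  assumes B: "bounded_clinear B"
  shows "block_pos (A - M) (adj B) B M \<longleftrightarrow>
    (\<forall>x y. 0 \<le> cinner (A x) x - cinner (M x) x + (cinner (B x) y + cnj (cinner (B x) y)) + cinner (M y) y)"
proof -
  have "cinner ((A - M) x + adj B y) x + cinner (B x + M y) y =
        cinner (A x) x - cinner (M x) x + (cinner (B x) y + cnj (cinner (B x) y)) + cinner (M y) y" for x y
  proof -
    have "cinner (adj B y) x = cnj (cinner (B x) y)"
      by (metis adj(2)[OF B] cinner_commute)
    then show ?thesis by (simp add: cinner_add_left cinner_diff_left)
  qed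
  then show ?thesis unfolding block_pos_def by simp
qed

lemma cof_real_nonneg: "0 \<le> r \<Longrightarrow> 0 \<le> complex_of_real r"
  by (simp add: less_eq_complex_def)

lemma cnj_add_self: "z + cnj z = complex_of_real (2 * Re z)"
  by (simp add: complex_add_cnj)

lemma necessity:
  fixes A B M :: "'a::chilbert_space \<Rightarrow> 'a"
    and E :: "'a \<Rightarrow> 'e::chilbert_space" and F :: "'a \<Rightarrow> 'f::chilbert_space" and G :: "'e \<Rightarrow> 'f"
  assumes A: "bounded_clinear A" and B: "bounded_clinear B"
    and M: "M \<in> Mset A B" and single: "Mset A B \<subseteq> {M}"
    and E: "bounded_clinear E" and F: "bounded_clinear F"
    and EE: "A - M = adj E \<circ> E" and FF: "M = adj F \<circ> F"
    and G: "contraction_between G (closure (range E)) (closure (range F))"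
    and BG: "B = adj F \<circ> G \<circ> E"
  shows "unitary_between G (closure (range E)) (closure (range F))"
proof -
  define U where "U = closure (range E)"
  define V where "V = closure (range F)"
  have GU: "contraction_between G U V" using G unfolding U_def V_def .
  have csU: "csubspace U" unfolding U_def by (rule csubspace_closure_range[OF E])
  have clU: "closed U" unfolding U_def by (rule closed_closure)
  have EU: "E x \<in> U" for x unfolding U_def by (rule subsetD[OF closure_subset]) simp
  have Mx: "M x = adj F (F x)" for x using FF by (metis comp_apply)
  have Ax: "A x = adj E (E x) + adj F (F x)" for x
  proof -
    have "A x - M x = adj E (E x)" using fun_cong[OF EE, of x] by simp
    then show ?thesis using Mx by (metis diff_add_cancel)
  qed
  have Ain: "cinner (A x) y = cinner (E x) (E y) + cinner (F x) (F y)" for x y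
    by (simp add: Ax cinner_add_left adj_left[OF E] adj_left[OF F])
  have Min: "cinner (M x) y = cinner (F x) (F y)" for x y
    by (simp add: Mx adj_left[OF F])
  define H where "H = (\<lambda>x. G (E x))"
  have Bx: "B x = adj F (H x)" for x unfolding H_def using BG by simp
  have Bin: "cinner (B x) y = cinner (H x) (F y)" for x y by (simp add: Bx adj_left[OF F])
  have HE: "norm (H x) \<le> norm (E x)" for x unfolding H_def using cb_norm[OF GU EU] .
  have H: "bounded_clinear H"
  proof -
    obtain K where K: "\<And>x. norm (E x) \<le> norm x * K" using bclin_bound[OF E] by blast
    show ?thesis
    proof (rule bclin_intro[where K=K])
      show "H (x + y) = H x + H y" for x y
        unfolding H_def by (simp add: bclin_add[OF E] cb_add[OF GU EU EU])
      show "H (scaleC c x) = scaleC c (H x)" for c x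
        unfolding H_def by (simp add: bclin_scaleC[OF E] cb_scaleC[OF GU EU])
      show "norm (H x) \<le> norm x * K" for x using HE[of x] K[of x] by linarith
    qed
  qed
  have HU: "H x \<in> V" for x unfolding H_def using cb_into[OF GU EU] .
  \<comment> \<open>Step 1: G is isometric on the range of E\<close>
  define M1 where "M1 = (\<lambda>x. A x - adj H (H x))"
  have M1b: "bounded_clinear M1" unfolding M1_def
    by (rule bclin_diff_fun[OF A bclin_comp[OF adj(1)[OF H] H]])
  have M1in: "cinner (M1 x) x = cinner (E x) (E x) + cinner (F x) (F x) - cinner (H x) (H x)" for x
    unfolding M1_def by (simp add: cinner_diff_left Ain adj_left[OF H])
  have sqdiff: "0 \<le> cinner (E x) (E x) - cinner (H x) (H x)" for x
  proof -
    have "0 \<le> (norm (E x))^2 - (norm (H x))^2" using HE[of x] by (simp add: power_mono)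
    then have "0 \<le> complex_of_real ((norm (E x))^2 - (norm (H x))^2)" by (rule cof_real_nonneg)
    then show ?thesis by (simp only: cinner_self of_real_diff)
  qed
  have M1M: "M1 \<in> Mset A B"
    unfolding Mset_def
  proof (intro CollectI conjI M1b)
    show "op_pos M1" unfolding op_pos_def
    proof
      fix x
      have "0 \<le> (cinner (E x) (E x) - cinner (H x) (H x)) + cinner (F x) (F x)"
        using sqdiff[of x] cinner_ge_zero[of "F x"] by (rule add_nonneg_nonneg)
      then show "0 \<le> cinner (M1 x) x" unfolding M1in by (simp add: algebra_simps)
    qed
    show "block_pos (A - M1) (adj B) B M1" unfolding block_pos_form[OF B]
    proof (intro allI)
      fix x y
      have "cinner (A x) x - cinner (M1 x) x + (cinner (B x) y + cnj (cinner (B x) y)) + cinner (M1 y) y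
         = cinner (H x + F y) (H x + F y) + (cinner (E y) (E y) - cinner (H y) (H y))"
        by (simp add: M1in Ain Bin cinner_add_left cinner_add_right cinner_commute[of "F y" "H x"] algebra_simps)
      moreover have "0 \<le> cinner (H x + F y) (H x + F y) + (cinner (E y) (E y) - cinner (H y) (H y))"
        using cinner_ge_zero sqdiff by (rule add_nonneg_nonneg)
      ultimately show "0 \<le> cinner (A x) x - cinner (M1 x) x + (cinner (B x) y + cnj (cinner (B x) y)) + cinner (M1 y) y"
        by simp
    qed
  qed
  then have "M1 = M" using single by blast
  then have isoE: "norm (H x) = norm (E x)" for x
  proof -
    assume "M1 = M"
    then have "cinner (M1 x) x = cinner (M x) x" by simp
    then have "cinner (E x) (E x) = cinner (H x) (H x)"
      unfolding M1in Min by simp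
    then have "(norm (E x))^2 = (norm (H x))^2"
      unfolding cinner_self of_real_eq_iff .
    then show ?thesis by (simp add: power2_eq_iff_nonneg)
  qed
  have isoU: "norm (G u) = norm u" if u: "u \<in> U" for u
  proof (rule antisym)
    show "norm (G u) \<le> norm u" by (rule cb_norm[OF GU u])
    show "norm u \<le> norm (G u)"
    proof (rule field_le_epsilon)
      fix e :: real assume e: "0 < e"
      have "\<exists>y\<in>range E. dist u y < e / 2"
        using u e unfolding U_def by (intro closure_approachableD) simp_all
      then obtain x where x: "dist u (E x) < e / 2" by (auto simp del: dist_commute)
      define w where "w = E x"
      have wU: "w \<in> U" unfolding w_def by (rule EU)
      have "norm u \<le> norm w + norm (u - w)" by (rule norm_triangle_sub)
      also have "norm w = norm (G w)" using isoE[of x] unfolding H_def w_def by simp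
      also have "norm (G w) \<le> norm (G u) + norm (G w - G u)" by (rule norm_triangle_sub)
      also have "G w - G u = G (w - u)" using cb_diff[OF GU csU wU u] by simp
      also have "norm (G (w - u)) \<le> norm (w - u)" using cb_norm[OF GU csubspace_diff[OF csU wU u]] .
      finally have "norm u \<le> norm (G u) + norm (w - u) + norm (u - w)" by simp
      moreover have "norm (u - w) < e / 2" using x unfolding w_def by (simp add: dist_norm)
      moreover have "norm (w - u) < e / 2" using x unfolding w_def by (simp add: dist_norm norm_minus_commute)
      ultimately show "norm u \<le> norm (G u) + e" by linarith
    qed
  qed
  have cinU: "cinner (G u) (G v) = cinner u v" if u: "u \<in> U" and v: "v \<in> U" for u v
  proof -
    have Rek: "Re (cinner (G a) (G b)) = Re (cinner a b)" if a: "a \<in> U" and b: "b \<in> U" for a b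
    proof -
      have ab: "a + b \<in> U" using csU a b unfolding csubspace_def by blast
      have "(norm (G (a + b)))^2 = (norm (a + b))^2" using isoU[OF ab] by simp
      then have "(norm (G a + G b))^2 = (norm (a + b))^2" using cb_add[OF GU a b] by simp
      then show ?thesis unfolding norm_add_sq using isoU[OF a] isoU[OF b] by simp
    qed
    have iv: "scaleC \<i> v \<in> U" using csU v unfolding csubspace_def by blast
    have "Re (cinner (G u) (G (scaleC \<i> v))) = Re (cinner u (scaleC \<i> v))" by (rule Rek[OF u iv])
    then have Im: "Im (cinner (G u) (G v)) = Im (cinner u v)"
      using cb_scaleC[OF GU v, of \<i>] by (simp add: cinner_scaleC_right)
    show ?thesis using Rek[OF u v] Im by (simp add: complex_eq_iff)
  qed
  \<comment> \<open>Step 2: the range of G is closed and contains the range of F\<close>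
  define W where "W = G ` U"
  have G0: "G 0 = 0"
  proof -
    have "(0::'e) \<in> U" using csU unfolding csubspace_def by blast
    then have "G (0 + 0) = G 0 + G 0" using cb_add[OF GU] by blast
    then show ?thesis by simp
  qed
  have csW: "csubspace W"
    unfolding csubspace_def W_def
  proof (intro conjI ballI allI)
    have "(0::'e) \<in> U" using csU unfolding csubspace_def by blast
    then have "G 0 \<in> G ` U" by (rule imageI)
    then show "0 \<in> G ` U" using G0 by simp
    show "x + y \<in> G ` U" if xy: "x \<in> G ` U" "y \<in> G ` U" for x y
    proof -
      obtain a b where "a \<in> U" "b \<in> U" "x = G a" "y = G b" using xy by blast
      moreover then have "a + b \<in> U" using csU unfolding csubspace_def by blast
      then have "G (a + b) \<in> G ` U" by (rule imageI)
      ultimately show ?thesis using cb_add[OF GU] by simp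
    qed
    show "scaleC c x \<in> G ` U" if xU: "x \<in> G ` U" for c x
    proof -
      obtain a where "a \<in> U" "x = G a" using xU by blast
      moreover then have "scaleC c a \<in> U" using csU unfolding csubspace_def by blast
      then have "G (scaleC c a) \<in> G ` U" by (rule imageI)
      ultimately show ?thesis using cb_scaleC[OF GU] by simp
    qed
  qed
  have clW: "closed W"
    unfolding closed_sequential_limits
  proof (intro allI impI, elim conjE)
    fix w l assume wW: "\<forall>n. w n \<in> W" and wl: "w \<longlonglongrightarrow> l"
    have ex: "\<exists>a. a \<in> U \<and> G a = w n" for n
    proof -
      have "w n \<in> G ` U" using wW unfolding W_def by simp
      then obtain a where "a \<in> U" "w n = G a" by (rule imageE)
      then show ?thesis by auto
    qed
    have "\<exists>f. \<forall>n. f n \<in> U \<and> G (f n) = w n" by (rule choice) (use ex in blast)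
    then obtain u where u': "\<forall>n. u n \<in> U \<and> G (u n) = w n" by blast
    then have u: "\<And>n. u n \<in> U" "\<And>n. G (u n) = w n" by auto
    have nu: "norm (u m - u n) = norm (w m - w n)" for m n
      using isoU[OF csubspace_diff[OF csU u(1) u(1)]] cb_diff[OF GU csU u(1) u(1)] u(2) by simp
    have "Cauchy w" using wl by (rule LIMSEQ_imp_Cauchy)
    then have "Cauchy u" unfolding Cauchy_iff nu .
    then obtain u0 where u0: "u \<longlonglongrightarrow> u0" using Cauchy_convergent convergent_def by blast
    have u0U: "u0 \<in> U" using closed_sequentially[OF clU _ u0] u(1) by blast
    have nu0: "norm (w n - G u0) = norm (u n - u0)" for n
      using isoU[OF csubspace_diff[OF csU u(1) u0U]] cb_diff[OF GU csU u(1) u0U] u(2) by simp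
    have "w \<longlonglongrightarrow> G u0" using u0 unfolding LIMSEQ_iff nu0 .
    then have "l = G u0" using wl LIMSEQ_unique by blast
    then show "l \<in> W" unfolding W_def using u0U by blast
  qed
  have HW: "H x \<in> W" for x unfolding H_def W_def using EU by blast
  define P where "P = (\<lambda>z. SOME p. p \<in> W \<and> (\<forall>k\<in>W. cinner k (z - p) = 0))"
  have Pex: "P z \<in> W \<and> (\<forall>k\<in>W. cinner k (z - P z) = 0)" for z
  proof -
    obtain p where "p \<in> W" "\<forall>k\<in>W. cinner k (z - p) = 0" using proj_exists[OF csW clW] by blast
    then show ?thesis unfolding P_def by (intro someI[where P="\<lambda>p. p \<in> W \<and> (\<forall>k\<in>W. cinner k (z - p) = 0)"]) blast
  qed
  have PW: "P z \<in> W" for z using Pex by blast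
  have Porth: "k \<in> W \<Longrightarrow> cinner k (z - P z) = 0" for k z using Pex by blast
  have Puniq: "p = P z" if p: "p \<in> W" "\<And>k. k \<in> W \<Longrightarrow> cinner k (z - p) = 0" for p z
  proof -
    define d where "d = p - P z"
    have dW: "d \<in> W" unfolding d_def by (rule csubspace_diff[OF csW p(1) PW])
    have "cinner d d = cinner d (z - P z) - cinner d (z - p)"
      unfolding d_def by (simp add: cinner_diff_right)
    also have "\<dots> = 0" using Porth[OF dW] p(2)[OF dW] by simp
    finally show ?thesis unfolding d_def by (simp add: cinner_eq_zero_iff)
  qed
  have Ppyth: "cinner z z = cinner (P z) (P z) + cinner (z - P z) (z - P z)" for z
  proof -
    have "cinner (P z) (z - P z) = 0" using Porth[OF PW] .
    moreover have "cinner (z - P z) (P z) = 0" using calculation by (metis cinner_commute complex_cnj_zero)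
    moreover have "z = P z + (z - P z)" by simp
    then have "cinner z z = cinner (P z + (z - P z)) (P z + (z - P z))" by simp
    ultimately show ?thesis by (simp only: cinner_add_left cinner_add_right) simp
  qed
  have Pb: "bounded_clinear P"
  proof (rule bclin_intro[where K=1])
    show "P (x + y) = P x + P y" for x y
    proof (rule Puniq[symmetric])
      show "P x + P y \<in> W" using csW PW unfolding csubspace_def by blast
      fix k assume k: "k \<in> W"
      have "(x + y) - (P x + P y) = (x - P x) + (y - P y)" by simp
      then show "cinner k ((x + y) - (P x + P y)) = 0" using Porth[OF k, of x] Porth[OF k, of y]
        by (simp only: cinner_add_right) simp
    qed
    show "P (scaleC c x) = scaleC c (P x)" for c x
    proof (rule Puniq[symmetric])
      show "scaleC c (P x) \<in> W" using csW PW unfolding csubspace_def by blast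
      fix k assume k: "k \<in> W"
      show "cinner k (scaleC c x - scaleC c (P x)) = 0"
        using Porth[OF k] by (simp add: scaleC_diff_right[symmetric] cinner_scaleC_right)
    qed
    show "norm (P x) \<le> norm x * 1" for x
    proof -
      have "(norm (P x))^2 \<le> (norm x)^2"
        using Ppyth[of x] unfolding cinner_self by (simp only: of_real_add[symmetric] of_real_eq_iff) simp
      then show ?thesis by (simp add: power2_le_iff_abs_le)
    qed
  qed
  define PF where "PF = (\<lambda>x. P (F x))"
  have PFb: "bounded_clinear PF" unfolding PF_def by (rule bclin_comp[OF Pb F])
  have PFpyth: "cinner (F x) (F x) = cinner (PF x) (PF x) + cinner (F x - PF x) (F x - PF x)" for x
    unfolding PF_def by (rule Ppyth)
  define M2 where "M2 = (\<lambda>x. adj PF (PF x))"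
  have M2b: "bounded_clinear M2" unfolding M2_def by (rule bclin_comp[OF adj(1)[OF PFb] PFb])
  have M2in: "cinner (M2 x) y = cinner (PF x) (PF y)" for x y
    unfolding M2_def by (simp add: adj_left[OF PFb])
  have M2M: "M2 \<in> Mset A B"
    unfolding Mset_def
  proof (intro CollectI conjI M2b)
    show "op_pos M2" unfolding op_pos_def M2in by (simp add: cinner_ge_zero)
    show "block_pos (A - M2) (adj B) B M2" unfolding block_pos_form[OF B]
    proof (intro allI)
      fix x y
      have HF: "cinner (H x) (F y) = cinner (H x) (PF y)"
        using Porth[OF HW[of x], of "F y"] unfolding PF_def by (simp add: cinner_diff_right)
      have "cinner (A x) x - cinner (M2 x) x + (cinner (B x) y + cnj (cinner (B x) y)) + cinner (M2 y) y
         = cinner (H x + PF y) (H x + PF y) + (cinner (E x) (E x) - cinner (H x) (H x))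
           + cinner (F x - PF x) (F x - PF x)"
        using PFpyth[of x]
        by (simp add: M2in Ain Bin HF cinner_add_left cinner_add_right cinner_commute[of "PF y" "H x"] algebra_simps)
      moreover have "0 \<le> cinner (H x + PF y) (H x + PF y) + (cinner (E x) (E x) - cinner (H x) (H x))
           + cinner (F x - PF x) (F x - PF x)"
        by (intro add_nonneg_nonneg cinner_ge_zero sqdiff)
      ultimately show "0 \<le> cinner (A x) x - cinner (M2 x) x + (cinner (B x) y + cnj (cinner (B x) y)) + cinner (M2 y) y"
        by simp
    qed
  qed
  then have "M2 = M" using single by blast
  have FW: "F y \<in> W" for y
  proof -
    have "cinner (M2 y) y = cinner (M y) y" using \<open>M2 = M\<close> by simp
    then have "cinner (PF y) (PF y) = cinner (F y) (F y)" unfolding M2in Min .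
    then have "cinner (F y - PF y) (F y - PF y) = 0" using PFpyth[of y] by simp
    then have "F y = PF y" by (simp add: cinner_eq_zero_iff)
    then show ?thesis unfolding PF_def using PW[of "F y"] by simp
  qed
  have "V \<subseteq> W" unfolding V_def by (rule closure_minimal) (use FW clW in auto)
  moreover have "W \<subseteq> V" unfolding W_def using cb_into[OF GU] by blast
  ultimately have onto: "G ` U = V" unfolding W_def by blast
  show ?thesis
    unfolding unitary_between_def U_def[symmetric] V_def[symmetric]
    using cb_add[OF GU] cb_scaleC[OF GU] onto cinU by blast
qed

lemma Mset_bclin: "M \<in> Mset A B \<Longrightarrow> bounded_clinear M"
  unfolding Mset_def by blast
lemma Mset_form:
  assumes B: "bounded_clinear B" and M: "M \<in> Mset A B"
  shows "0 \<le> Re (cinner (A x) x) - Re (cinner (M x) x) + 2 * Re (cinner (B x) y) + Re (cinner (M y) y)"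
proof -
  have "block_pos (A - M) (adj B) B M" using M unfolding Mset_def by blast
  then have "0 \<le> cinner (A x) x - cinner (M x) x + (cinner (B x) y + cnj (cinner (B x) y)) + cinner (M y) y"
    unfolding block_pos_form[OF B] by blast
  then have "0 \<le> Re (cinner (A x) x - cinner (M x) x + (cinner (B x) y + cnj (cinner (B x) y)) + cinner (M y) y)"
    by (simp add: less_eq_complex_def)
  then show ?thesis by simp
qed

lemma op_le_D: "op_le S T \<Longrightarrow> 0 \<le> cinner (T x) x - cinner (S x) x"
  unfolding op_le_def op_pos_def by (simp add: cinner_diff_left)

lemma sufficiency:
  fixes A B Mp Mm :: "'a::chilbert_space \<Rightarrow> 'a"
    and Es :: "'a \<Rightarrow> 'e::chilbert_space" and Fs :: "'a \<Rightarrow> 'f::chilbert_space" and Gs :: "'e \<Rightarrow> 'f"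
  assumes Ms_def: "Ms = (\<lambda>x. scaleR (1/2) (Mp x + Mm x))"
  assumes A: "bounded_clinear A" and B: "bounded_clinear B"
    and Mp: "Mp \<in> Mset A B" "\<forall>M\<in>Mset A B. op_le M Mp"
    and Mm: "Mm \<in> Mset A B" "\<forall>M\<in>Mset A B. op_le Mm M"
    and E: "bounded_clinear Es" and F: "bounded_clinear Fs"
    and EE: "A - Ms = adj Es \<circ> Es" and FF: "Ms = adj Fs \<circ> Fs"
    and G: "unitary_between Gs (closure (range Es)) (closure (range Fs))"
    and BG: "B = adj Fs \<circ> Gs \<circ> Es"
  shows "Mset A B = {Mp}"
proof -
  define U where "U = closure (range Es)"
  define V where "V = closure (range Fs)"
  have GU: "contraction_between Gs U V" using ub_cb[OF G] unfolding U_def V_def .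
  have onto: "Gs ` U = V" using G unfolding unitary_between_def U_def V_def by blast
  have cinU: "\<And>u v. u \<in> U \<Longrightarrow> v \<in> U \<Longrightarrow> cinner (Gs u) (Gs v) = cinner u v"
    using G unfolding unitary_between_def U_def V_def by blast
  have isoU: "norm (Gs u) = norm u" if "u \<in> U" for u
    using cinU[OF that that] by (simp add: norm_eq_sqrt_cinner)
  have csU: "csubspace U" unfolding U_def by (rule csubspace_closure_range[OF E])
  have EU: "Es x \<in> U" for x unfolding U_def by (rule subsetD[OF closure_subset]) simp
  have Mpb: "bounded_clinear Mp" by (rule Mset_bclin[OF Mp(1)])
  have Mmb: "bounded_clinear Mm" by (rule Mset_bclin[OF Mm(1)])
  have Msx: "Ms x = adj Fs (Fs x)" for x using FF by (metis comp_apply)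
  have Ax: "A x = adj Es (Es x) + Ms x" for x
  proof -
    have "A x - Ms x = adj Es (Es x)" using fun_cong[OF EE, of x] by simp
    then show ?thesis by (metis diff_add_cancel)
  qed
  have Bx: "B x = adj Fs (Gs (Es x))" for x using BG by simp
  define mp where "mp v = Re (cinner (Mp v) v)" for v
  define mm where "mm v = Re (cinner (Mm v) v)" for v
  define d where "d v = mp v - mm v" for v
  define q where "q x y = (norm (Gs (Es x) + Fs y))^2" for x y
  have ms1: "Re (cinner (Ms v) v) = (norm (Fs v))^2" for v
    by (simp add: Msx adj_left[OF F] cinner_self_Re)
  have ms2: "Re (cinner (Ms v) v) = (mp v + mm v) / 2" for v
    unfolding mp_def mm_def Ms_def by (simp add: cinner_scaleR_left cinner_add_left)
  have Re_form: "Re (cinner (A x) x) + 2 * Re (cinner (B x) y) = q x y - (norm (Fs y))^2 + (norm (Fs x))^2" for x y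
  proof -
    have "Re (cinner (A x) x) = (norm (Es x))^2 + (norm (Fs x))^2"
      using ms1[of x] by (simp add: Ax cinner_add_left adj_left[OF E] cinner_self_Re)
    moreover have "Re (cinner (B x) y) = Re (cinner (Gs (Es x)) (Fs y))"
      by (simp add: Bx adj_left[OF F])
    moreover have "q x y = (norm (Es x))^2 + (norm (Fs y))^2 + 2 * Re (cinner (Gs (Es x)) (Fs y))"
      unfolding q_def norm_add_sq isoU[OF EU] ..
    ultimately show ?thesis by simp
  qed
  have key1: "d x \<le> d y + 2 * q x y" for x y
  proof -
    have "0 \<le> Re (cinner (A x) x) - mp x + 2 * Re (cinner (B x) y) + mp y"
      using Mset_form[OF B Mp(1), of x y] unfolding mp_def .
    then show ?thesis using Re_form[of x y] ms1[of x] ms1[of y] ms2[of x] ms2[of y] unfolding d_def by simp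
  qed
  have key2: "d y \<le> d x + 2 * q x y" for x y
  proof -
    have "0 \<le> Re (cinner (A x) x) - mm x + 2 * Re (cinner (B x) y) + mm y"
      using Mset_form[OF B Mm(1), of x y] unfolding mm_def .
    then show ?thesis using Re_form[of x y] ms1[of x] ms1[of y] ms2[of x] ms2[of y] unfolding d_def by simp
  qed
  have d0: "0 \<le> d v" for v
    using op_le_D[OF Mm(2)[rule_format, OF Mp(1)], of v] unfolding d_def mp_def mm_def
    by (simp add: less_eq_complex_def)
  have dscale: "d (scaleR t v) = t^2 * d v" for t v
    unfolding d_def mp_def mm_def
    by (simp add: bclin_scaleR[OF Mpb] bclin_scaleR[OF Mmb] cinner_scaleR_left cinner_scaleR_right power2_eq_square algebra_simps)
  have approx: "\<exists>x. norm (Gs (Es x) + Fs y) < e" if e: "0 < e" for y e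
  proof -
    have "Fs (- y) \<in> V" unfolding V_def by (rule subsetD[OF closure_subset]) simp
    then have "Fs (- y) \<in> Gs ` U" using onto by simp
    then obtain u where u: "u \<in> U" "Gs u = Fs (- y)" by (metis imageE)
    have "\<exists>w\<in>range Es. dist u w < e" using u(1) e unfolding U_def by (rule closure_approachableD)
    then obtain x where x: "dist u (Es x) < e" by auto
    have "Gs (Es x) + Fs y = Gs (Es x) - Gs u" using u(2) bclin_minus[OF F] by simp
    also have "\<dots> = Gs (Es x - u)" using cb_diff[OF GU csU EU u(1)] by simp
    finally have "norm (Gs (Es x) + Fs y) = norm (Es x - u)" using isoU[OF csubspace_diff[OF csU EU u(1)]] by simp
    moreover have "norm (u - Es x) < e" using x by (simp add: dist_norm)
    ultimately show ?thesis by (intro exI[of _ x]) (simp add: norm_minus_commute)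
  qed
  have dzero: "d y = 0" for y
  proof -
    define K where "K = norm (Fs y)"
    define C where "C = 1 + (1 + K)^2"
    have C0: "0 < C" unfolding C_def by (simp add: add_pos_nonneg)
    have small: "d y \<le> e * C" if e: "0 < e" for e
    proof -
      obtain x where x: "norm (Gs (Es x) + Fs y) < e" using approx[OF e] by blast
      have q1: "q x y \<le> e^2" unfolding q_def using x by (simp add: power_strict_mono less_imp_le)
      have "Gs (Es x) + Fs (scaleR (1 + e) y) = (Gs (Es x) + Fs y) + scaleR e (Fs y)"
        using bclin_scaleR[OF F, of "1 + e" y] by (simp add: algebra_simps)
      then have "norm (Gs (Es x) + Fs (scaleR (1 + e) y)) \<le> norm (Gs (Es x) + Fs y) + e * K"
        unfolding K_def using norm_triangle_ineq[of "Gs (Es x) + Fs y" "scaleR e (Fs y)"] e by (simp add: add.assoc)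
      also have "\<dots> \<le> e * (1 + K)" using x by (simp add: algebra_simps)
      finally have "q x (scaleR (1 + e) y) \<le> (e * (1 + K))^2" unfolding q_def
        by (intro power_mono) auto
      then have q2: "q x (scaleR (1 + e) y) \<le> e^2 * (1 + K)^2" by (simp add: power_mult_distrib)
      have "(1 + e)^2 * d y \<le> d y + 2 * e^2 + 2 * (e^2 * (1 + K)^2)"
        using key2[of "scaleR (1 + e) y" x] key1[of x y] q1 q2 dscale[of "1 + e" y] by simp
      then have "2 * e * d y + e^2 * d y \<le> 2 * e^2 * C" unfolding C_def by (simp add: power2_eq_square algebra_simps)
      moreover have "0 \<le> e^2 * d y" using d0 by simp
      ultimately have "2 * e * d y \<le> 2 * e * (e * C)" by (simp add: power2_eq_square algebra_simps)
      then show ?thesis using e by simp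
    qed
    show ?thesis
    proof (rule ccontr)
      assume "d y \<noteq> 0"
      then have dp: "0 < d y" using d0[of y] by simp
      have "d y \<le> (d y / (2 * C)) * C" using small[of "d y / (2 * C)"] dp C0 by simp
      then show False using dp C0 by simp
    qed
  qed
  have MpMm: "Mp y = Mm y" for y
  proof -
    have "(\<lambda>v. Mp v - Mm v) y = 0"
    proof (rule polarization_zero[where T="\<lambda>v. Mp v - Mm v"])
      show "Mp (x + z) - Mm (x + z) = (Mp x - Mm x) + (Mp z - Mm z)" for x z
        by (simp add: bclin_add[OF Mpb] bclin_add[OF Mmb])
      show "Mp (scaleC c x) - Mm (scaleC c x) = scaleC c (Mp x - Mm x)" for c x
        by (simp add: bclin_scaleC[OF Mpb] bclin_scaleC[OF Mmb] scaleC_diff_right)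
      show "cinner (Mp x - Mm x) x = 0" for x
      proof -
        have "0 \<le> cinner (Mp x) x - cinner (Mm x) x"
          by (rule op_le_D[OF Mm(2)[rule_format, OF Mp(1)]])
        then have "Im (cinner (Mp x) x - cinner (Mm x) x) = 0" by (simp add: less_eq_complex_def)
        moreover have "Re (cinner (Mp x) x - cinner (Mm x) x) = 0" using dzero[of x] unfolding d_def mp_def mm_def by simp
        ultimately show ?thesis by (simp add: cinner_diff_left complex_eq_iff)
      qed
    qed
    then show ?thesis by simp
  qed
  have "M = Mp" if M: "M \<in> Mset A B" for M
  proof
    fix y
    have Mb: "bounded_clinear M" by (rule Mset_bclin[OF M])
    have "(\<lambda>v. Mp v - M v) y = 0"
    proof (rule polarization_zero[where T="\<lambda>v. Mp v - M v"])
      show "Mp (x + z) - M (x + z) = (Mp x - M x) + (Mp z - M z)" for x z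
        by (simp add: bclin_add[OF Mpb] bclin_add[OF Mb])
      show "Mp (scaleC c x) - M (scaleC c x) = scaleC c (Mp x - M x)" for c x
        by (simp add: bclin_scaleC[OF Mpb] bclin_scaleC[OF Mb] scaleC_diff_right)
      show "cinner (Mp x - M x) x = 0" for x
      proof -
        have a: "0 \<le> cinner (Mp x) x - cinner (M x) x" by (rule op_le_D[OF Mp(2)[rule_format, OF M]])
        have "0 \<le> cinner (M x) x - cinner (Mm x) x" by (rule op_le_D[OF Mm(2)[rule_format, OF M]])
        then have b: "cinner (Mp x) x - cinner (M x) x \<le> 0" using MpMm[of x] by simp
        from a b show ?thesis by (simp add: cinner_diff_left)
      qed
    qed
    then show "M y = Mp y" by simp
  qed
  then show ?thesis using Mp(1) by blast
qed

theorem lemma4p2: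
  fixes A B Mp Mm :: "'a::chilbert_space \<Rightarrow> 'a"
    and Ep :: "'a \<Rightarrow> 'e1::chilbert_space" and Fp :: "'a \<Rightarrow> 'f1::chilbert_space"
    and Gp :: "'e1 \<Rightarrow> 'f1"
    and Em :: "'a \<Rightarrow> 'e2::chilbert_space" and Fm :: "'a \<Rightarrow> 'f2::chilbert_space"
    and Gm :: "'e2 \<Rightarrow> 'f2"
    and Es :: "'a \<Rightarrow> 'e3::chilbert_space" and Fs :: "'a \<Rightarrow> 'f3::chilbert_space"
    and Gs :: "'e3 \<Rightarrow> 'f3"
  defines "Ms \<equiv> (\<lambda>x. scaleR (1/2) (Mp x + Mm x))"
  assumes A: "bounded_clinear A" "selfadjoint A"
    and B: "bounded_clinear B"
    and Mp: "Mp \<in> Mset A B" "\<forall>M\<in>Mset A B. op_le M Mp"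
    and Mm: "Mm \<in> Mset A B" "\<forall>M\<in>Mset A B. op_le Mm M"
    and E: "bounded_clinear Ep" "bounded_clinear Em" "bounded_clinear Es"
    and F: "bounded_clinear Fp" "bounded_clinear Fm" "bounded_clinear Fs"
    and EE: "A - Mp = adj Ep \<circ> Ep" "A - Mm = adj Em \<circ> Em" "A - Ms = adj Es \<circ> Es"
    and FF: "Mp = adj Fp \<circ> Fp" "Mm = adj Fm \<circ> Fm" "Ms = adj Fs \<circ> Fs"
    and G: "contraction_between Gp (closure (range Ep)) (closure (range Fp))"
           "contraction_between Gm (closure (range Em)) (closure (range Fm))"
           "contraction_between Gs (closure (range Es)) (closure (range Fs))"
    and BG: "B = adj Fp \<circ> Gp \<circ> Ep" "B = adj Fm \<circ> Gm \<circ> Em" "B = adj Fs \<circ> Gs \<circ> Es"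
  shows "(\<exists>M. Mset A B = {M}) \<longleftrightarrow>
           unitary_between Gp (closure (range Ep)) (closure (range Fp)) \<and>
           unitary_between Gm (closure (range Em)) (closure (range Fm)) \<and>
           unitary_between Gs (closure (range Es)) (closure (range Fs))"
proof
  assume "\<exists>M. Mset A B = {M}"
  then obtain M where MM: "Mset A B = {M}" by blast
  have pM: "Mp = M" using Mp(1) MM by blast
  have mM: "Mm = M" using Mm(1) MM by blast
  have sM: "Ms = M" unfolding Ms_def pM mM by (rule ext) (simp add: scaleR_2[symmetric])
  have s1: "Mset A B \<subseteq> {Mp}" using MM pM by simp
  have s2: "Mset A B \<subseteq> {Mm}" using MM mM by simp
  have s3: "Mset A B \<subseteq> {Ms}" using MM sM by simp
  have Ms_in: "Ms \<in> Mset A B" using MM sM by simp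
  show "unitary_between Gp (closure (range Ep)) (closure (range Fp)) \<and>
        unitary_between Gm (closure (range Em)) (closure (range Fm)) \<and>
        unitary_between Gs (closure (range Es)) (closure (range Fs))"
    using necessity[OF A(1) B Mp(1) s1 E(1) F(1) EE(1) FF(1) G(1) BG(1)]
      necessity[OF A(1) B Mm(1) s2 E(2) F(2) EE(2) FF(2) G(2) BG(2)]
      necessity[OF A(1) B Ms_in s3 E(3) F(3) EE(3) FF(3) G(3) BG(3)]
    by blast
next
  assume "unitary_between Gp (closure (range Ep)) (closure (range Fp)) \<and>
        unitary_between Gm (closure (range Em)) (closure (range Fm)) \<and>
        unitary_between Gs (closure (range Es)) (closure (range Fs))"
  then have Gu: "unitary_between Gs (closure (range Es)) (closure (range Fs))" by blast
  have "Mset A B = {Mp}"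
    by (rule sufficiency[OF _ A(1) B Mp Mm E(3) F(3) EE(3) FF(3) Gu BG(3)]) (simp add: Ms_def)
  then show "\<exists>M. Mset A B = {M}" by blast
qed

end
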